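(* Let $p$ be an odd prime, $G=\mu_p\times\mu_p$, and let $\mathcal{P}$ be a fusion partition of $G$ having exactly $p$ singular sets and such that every non-singular set has exactly two elements. Then there exist $\alpha,\beta\in G$ such that the singular sets are exactly $\{\alpha^i\}$, $i=0,\dots,p-1$, and the non-singular sets are exactly the sets $\{\alpha^i\beta^j,\alpha^i\beta^{-j}\}$ with $0\le i\le p-1$ and $1\le j\le p-1$.
   Context: A unital partition of a finite commutative group $G$ is a partition $G=\{1\}\sqcup A_0\sqcup\dots\sqcup A_s$ such that, with $a_i=\sum_{x\in A_i}x\in\mathbb{Z}[G]$, the $\mathbb{Z}$-span of $1$ and the $a_i$ is closed under multiplication in $\mathbb{Z}[G]$. It is a fusion partition if moreover (1) for each member $A_i$ the set $\{x^{-1}:x\in A_i\}$ is a member, denoted $A_{i^*}$, and (2) writing $a_ia_j=\sum_kn^k_{i,j}a_k$, one has $n^k_{i,j}|A_k|=n^{j^*}_{i,k^*}|A_{j^*}|$. A member of a partition is singular if it has exactly one element (the set $\{1\}$ counts as singular). *)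

theory Defs
  imports "HOL-Analysis.Analysis" "HOL-Computational_Algebra.Primes"
begin

type_synonym elt = "complex \<times> complex"

definition mu2 :: "nat \<Rightarrow> elt set" where
  "mu2 p = {(z, w). z ^ p = 1 \<and> w ^ p = 1}"

definition gone :: elt where "gone = (1, 1)"

definition gmul :: "elt \<Rightarrow> elt \<Rightarrow> elt" where
  "gmul x y = (fst x * fst y, snd x * snd y)"

definition ginv :: "elt \<Rightarrow> elt" where
  "ginv x = (inverse (fst x), inverse (snd x))"

definition gpow :: "elt \<Rightarrow> nat \<Rightarrow> elt" where
  "gpow x i = (fst x ^ i, snd x ^ i)"

text \<open>Elements of the group ring Z[G] are integer-valued functions on G
  (zero outside G); product is convolution.\<close>

definition ind :: "elt set \<Rightarrow> elt \<Rightarrow> int" where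
  "ind A = (\<lambda>x. if x \<in> A then 1 else 0)"

definition conv :: "elt set \<Rightarrow> (elt \<Rightarrow> int) \<Rightarrow> (elt \<Rightarrow> int) \<Rightarrow> elt \<Rightarrow> int" where
  "conv G f g = (\<lambda>z. \<Sum>x\<in>G. f x * g (gmul (ginv x) z))"

definition is_partition_with_one :: "elt set \<Rightarrow> elt set set \<Rightarrow> bool" where
  "is_partition_with_one G P \<longleftrightarrow>
     (\<forall>A\<in>P. A \<noteq> {} \<and> A \<subseteq> G) \<and> \<Union>P = G \<and>
     (\<forall>A\<in>P. \<forall>B\<in>P. A \<noteq> B \<longrightarrow> A \<inter> B = {}) \<and> {gone} \<in> P"

definition zspan :: "elt set set \<Rightarrow> (elt \<Rightarrow> int) set" where
  "zspan P = {f. \<exists>c :: elt set \<Rightarrow> int. f = (\<lambda>x. \<Sum>C\<in>P. c C * ind C x)}"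

definition unital_partition :: "elt set \<Rightarrow> elt set set \<Rightarrow> bool" where
  "unital_partition G P \<longleftrightarrow> is_partition_with_one G P \<and>
     (\<forall>f\<in>zspan P. \<forall>g\<in>zspan P. conv G f g \<in> zspan P)"

text \<open>Structure constant n^C_{A,B}: coefficient of the class sum of C in a_A a_B,
  i.e. the (block-constant) value of a_A a_B at an element of C.\<close>
definition struct_const :: "elt set \<Rightarrow> elt set \<Rightarrow> elt set \<Rightarrow> elt set \<Rightarrow> int" where
  "struct_const G A B C = conv G (ind A) (ind B) (SOME x. x \<in> C)"

definition fusion_partition :: "elt set \<Rightarrow> elt set set \<Rightarrow> bool" where
  "fusion_partition G P \<longleftrightarrow> unital_partition G P \<and>
     (\<forall>A\<in>P. ginv ` A \<in> P) \<and>
     (\<forall>A\<in>P. \<forall>B\<in>P. \<forall>C\<in>P.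
        struct_const G A B C * int (card C) =
        struct_const G A (ginv ` C) (ginv ` B) * int (card (ginv ` B)))"

definition singular :: "elt set \<Rightarrow> bool" where
  "singular A \<longleftrightarrow> card A = 1"

end

theory Submission
  imports Defs
begin


lemma mu2_eq: "mu2 p = {z. z ^ p = 1} \<times> {w. w ^ p = 1}"
  by (auto simp: mu2_def)

lemma finite_mu2: "p > 0 \<Longrightarrow> finite (mu2 p)"
  unfolding mu2_eq by (intro finite_cartesian_product finite_roots_unity) auto

lemma card_mu2: "p > 0 \<Longrightarrow> card (mu2 p) = p * p"
  unfolding mu2_eq by (simp add: card_cartesian_product card_roots_unity_eq)

lemma mu2_nz: "p > 0 \<Longrightarrow> x \<in> mu2 p \<Longrightarrow> fst x \<noteq> 0 \<and> snd x \<noteq> 0"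
  by (cases p) (auto simp: mu2_def)

lemma gone_mem: "gone \<in> mu2 p" by (simp add: mu2_def gone_def)
lemma gmul_mem: "x \<in> mu2 p \<Longrightarrow> y \<in> mu2 p \<Longrightarrow> gmul x y \<in> mu2 p"
  by (auto simp: mu2_def gmul_def power_mult_distrib)
lemma ginv_mem: "x \<in> mu2 p \<Longrightarrow> ginv x \<in> mu2 p"
  by (auto simp: mu2_def ginv_def power_inverse)
lemma gpow_mem: assumes "x \<in> mu2 p" shows "gpow x n \<in> mu2 p"
proof -
  have e: "(a ^ n) ^ p = (a ^ p) ^ n" for a :: complex by (simp add: power_mult[symmetric] mult.commute)
  show ?thesis using assms by (auto simp: mu2_def gpow_def e)
qed

lemma gmul_assoc: "gmul (gmul x y) z = gmul x (gmul y z)" by (simp add: gmul_def mult.assoc)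
lemma gmul_left_comm: "gmul x (gmul y z) = gmul y (gmul x z)" by (simp add: gmul_def mult.left_commute)
lemma gmul_comm: "gmul x y = gmul y x" by (simp add: gmul_def mult.commute)
lemma gmul_gone[simp]: "gmul gone x = x" "gmul x gone = x" by (simp_all add: gmul_def gone_def)
lemma ginv_gone[simp]: "ginv gone = gone" by (simp add: ginv_def gone_def)
lemma ginv_ginv[simp]: "ginv (ginv x) = x" by (simp add: ginv_def)
lemma ginv_gmul: "ginv (gmul x y) = gmul (ginv x) (ginv y)" by (simp add: ginv_def gmul_def)
lemma gmul_ginv: "p > 0 \<Longrightarrow> x \<in> mu2 p \<Longrightarrow> gmul x (ginv x) = gone"
  by (drule (1) mu2_nz) (simp add: gmul_def ginv_def gone_def)
lemma gmul_ginv2: "p > 0 \<Longrightarrow> x \<in> mu2 p \<Longrightarrow> gmul (ginv x) x = gone"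
  by (drule (1) mu2_nz) (simp add: gmul_def ginv_def gone_def)
lemma gpow_0[simp]: "gpow x 0 = gone" by (simp add: gpow_def gone_def)
lemma gpow_Suc: "gpow x (Suc n) = gmul x (gpow x n)" by (simp add: gpow_def gmul_def)
lemma gpow_add: "gpow x (m + n) = gmul (gpow x m) (gpow x n)" by (simp add: gpow_def gmul_def power_add)
lemma gpow_mult: "gpow x (m * n) = gpow (gpow x m) n" by (simp add: gpow_def power_mult)
lemma gpow_1[simp]: "gpow x 1 = x" by (simp add: gpow_def)
lemma gpow_gone[simp]: "gpow gone n = gone" by (simp add: gpow_def gone_def)
lemma gpow_gmul: "gpow (gmul x y) n = gmul (gpow x n) (gpow y n)" by (simp add: gpow_def gmul_def power_mult_distrib)
lemma gpow_ginv: "gpow (ginv x) n = ginv (gpow x n)" by (simp add: gpow_def ginv_def power_inverse)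
lemma gpow_p: "x \<in> mu2 p \<Longrightarrow> gpow x p = gone" by (auto simp: gpow_def mu2_def gone_def)

lemma gmul_cancel: "p > 0 \<Longrightarrow> c \<in> mu2 p \<Longrightarrow> gmul c x = gmul c y \<longleftrightarrow> x = y"
  by (drule (1) mu2_nz) (auto simp: gmul_def prod_eq_iff)

lemma gsqrt: assumes "odd p" "x \<in> mu2 p" shows "gpow (gmul x x) ((p+1) div 2) = x"
proof -
  have "gpow (gmul x x) ((p+1) div 2) = gpow x (2 * ((p+1) div 2))"
    by (simp add: gpow_def gmul_def power_mult power2_eq_square)
  also have "2 * ((p+1) div 2) = p + 1" using assms(1) by simp
  also have "gpow x (p+1) = x" using gpow_p[OF assms(2)] by (simp add: gpow_def gone_def prod_eq_iff)
  finally show ?thesis .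
qed

lemma root_coprime:
  fixes z :: complex
  assumes "z ^ p = 1" "z ^ k = 1" "coprime k p" "k > 0"
  shows "z = 1"
proof -
  obtain a b where ab: "k * a = p * b + gcd k p" using bezout_nat[of k p] assms(4) by auto
  hence "k * a = p * b + 1" using assms(3) by simp
  hence "z ^ (k * a) = z ^ (p * b) * z" by (simp add: power_add)
  thus ?thesis using assms by (simp add: power_mult)
qed

lemma gpow_coprime:
  assumes "x \<in> mu2 p" "gpow x k = gone" "coprime k p" "k > 0"
  shows "x = gone"
  using assms root_coprime[of "fst x" p k] root_coprime[of "snd x" p k]
  by (auto simp: mu2_def gpow_def gone_def prod_eq_iff)




lemma conv_ind:
  assumes "finite G" "A \<subseteq> G"
  shows "conv G (ind A) g z = (\<Sum>a\<in>A. g (gmul (ginv a) z))"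
proof -
  have "conv G (ind A) g z = (\<Sum>x\<in>G. if x \<in> A then g (gmul (ginv x) z) else 0)"
    unfolding conv_def ind_def by (intro sum.cong) auto
  also have "\<dots> = (\<Sum>x\<in>A. g (gmul (ginv x) z))"
    using assms by (simp add: sum.If_cases Int_absorb1)
  finally show ?thesis .
qed

lemma conv_ind2:
  assumes "finite G" "{a, b} \<subseteq> G" "a \<noteq> b"
  shows "conv G (ind {a,b}) g z = g (gmul (ginv a) z) + g (gmul (ginv b) z)"
  using conv_ind[OF assms(1,2)] assms(3) by simp

lemma conv_ind1:
  assumes "finite G" "a \<in> G"
  shows "conv G (ind {a}) g z = g (gmul (ginv a) z)"
  using conv_ind[of G "{a}"] assms by simp

locale FP =
  fixes p :: nat and P :: "elt set set"
  assumes prime: "prime p" and odd: "odd p" and unital: "unital_partition (mu2 p) P"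
    and pair: "\<forall>A\<in>P. \<not> singular A \<longrightarrow> card A = 2"
begin

abbreviation "G \<equiv> mu2 p"

lemma p_pos: "p > 0" using prime prime_gt_0_nat by blast
lemma finG: "finite G" using finite_mu2 p_pos by blast

lemma P_sub: "A \<in> P \<Longrightarrow> A \<subseteq> G" and P_ne: "A \<in> P \<Longrightarrow> A \<noteq> {}"
  using unital by (auto simp: unital_partition_def is_partition_with_one_def)

lemma P_disj: "A \<in> P \<Longrightarrow> B \<in> P \<Longrightarrow> x \<in> A \<Longrightarrow> x \<in> B \<Longrightarrow> A = B"
  using unital unfolding unital_partition_def is_partition_with_one_def by blast

lemma P_cover: "x \<in> G \<Longrightarrow> \<exists>B\<in>P. x \<in> B"
  using unital by (auto simp: unital_partition_def is_partition_with_one_def)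

lemma one_P: "{gone} \<in> P"
  using unital by (auto simp: unital_partition_def is_partition_with_one_def)

lemma finP: "finite P"
proof -
  have "P \<subseteq> Pow G" using P_sub by auto
  thus ?thesis using finG finite_subset by blast
qed

lemma finA: "A \<in> P \<Longrightarrow> finite A" using P_sub finG finite_subset by blast

lemma card12: "A \<in> P \<Longrightarrow> card A = 1 \<or> card A = 2"
  using pair by (auto simp: singular_def)

lemma span_val:
  assumes "B \<in> P" "x \<in> B"
  shows "(\<Sum>C\<in>P. c C * ind C x) = c B"
proof -
  have "(\<Sum>C\<in>P. c C * ind C x) = c B * ind B x + (\<Sum>C\<in>P - {B}. c C * ind C x)"
    using finP assms(1) by (simp add: sum.remove)
  also have "(\<Sum>C\<in>P - {B}. c C * ind C x) = 0"
  proof (intro sum.neutral ballI)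
    fix C assume "C \<in> P - {B}"
    hence "x \<notin> C" using P_disj assms by blast
    thus "c C * ind C x = 0" by (simp add: ind_def)
  qed
  finally show ?thesis using assms by (simp add: ind_def)
qed

lemma ind_span: "A \<in> P \<Longrightarrow> ind A \<in> zspan P"
proof -
  assume A: "A \<in> P"
  have "ind A = (\<lambda>x. \<Sum>C\<in>P. (\<lambda>C. if C = A then 1 else 0) C * ind C x)"
  proof
    fix x
    show "ind A x = (\<Sum>C\<in>P. (\<lambda>C. if C = A then 1 else 0) C * ind C x)"
    proof -
      have "(\<Sum>C\<in>P. (\<lambda>C. if C = A then 1 else 0) C * ind C x) = (\<Sum>C\<in>P. if C = A then ind A x else 0)"
        by (intro sum.cong) auto
      also have "\<dots> = ind A x" using finP A by (simp add: sum.delta)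
      finally show ?thesis by simp
    qed
  qed
  thus ?thesis unfolding zspan_def by (intro CollectI exI)
qed

lemma block_const:
  assumes "A \<in> P" "B \<in> P" "C \<in> P" "x \<in> C" "y \<in> C"
  shows "conv G (ind A) (ind B) x = conv G (ind A) (ind B) y"
proof -
  have "conv G (ind A) (ind B) \<in> zspan P"
    using unital ind_span assms(1,2) by (auto simp: unital_partition_def)
  then obtain c where c: "conv G (ind A) (ind B) = (\<lambda>x. \<Sum>C\<in>P. c C * ind C x)"
    unfolding zspan_def by blast
  show ?thesis unfolding c using span_val assms(3-5) by simp
qed

end



context FP begin

lemma nzG: "x \<in> G \<Longrightarrow> fst x \<noteq> 0 \<and> snd x \<noteq> 0" using mu2_nz p_pos by blast

lemma cancel1: "x \<in> G \<Longrightarrow> gmul (ginv x) (gmul x y) = y"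
  using nzG[of x] by (simp add: gmul_def ginv_def prod_eq_iff)
lemma cancel2: "x \<in> G \<Longrightarrow> gmul x (gmul (ginv x) y) = y"
  using nzG[of x] by (simp add: gmul_def ginv_def prod_eq_iff)
lemma inv_unique: "x \<in> G \<Longrightarrow> gmul x y = gone \<Longrightarrow> y = ginv x"
  using nzG[of x] by (auto simp: gmul_def ginv_def gone_def prod_eq_iff field_simps)
lemma sq_one: "x \<in> G \<Longrightarrow> gmul x x = gone \<Longrightarrow> x = gone"
  using gsqrt[OF odd, of x] by simp
lemma sq_inj: "x \<in> G \<Longrightarrow> y \<in> G \<Longrightarrow> gmul x x = gmul y y \<Longrightarrow> x = y"
  using gsqrt[OF odd, of x] gsqrt[OF odd, of y] by metis
lemma gsqrt2: assumes "x \<in> G"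
  shows "gmul (gpow x ((p+1) div 2)) (gpow x ((p+1) div 2)) = x"
proof -
  have "gmul (gpow x ((p+1) div 2)) (gpow x ((p+1) div 2)) = gpow x ((p+1) div 2 + (p+1) div 2)"
    by (simp add: gpow_add)
  also have "(p+1) div 2 + (p+1) div 2 = p + 1" using odd by presburger
  also have "gpow x (p+1) = x" using gpow_p[OF assms] by (simp add: gpow_def gone_def prod_eq_iff)
  finally show ?thesis .
qed

definition H where "H = {x. {x} \<in> P}"

lemma H_G: "x \<in> H \<Longrightarrow> x \<in> G" using P_sub by (auto simp: H_def)
lemma gone_H: "gone \<in> H" using one_P by (simp add: H_def)

lemma H_mul: assumes "h \<in> H" "k \<in> H" shows "gmul h k \<in> H"
proof -
  have hG: "h \<in> G" and kG: "k \<in> G" using assms H_G by auto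
  have hk: "gmul h k \<in> G" using gmul_mem hG kG by blast
  obtain B where B: "B \<in> P" "gmul h k \<in> B" using P_cover hk by blast
  let ?f = "conv G (ind {h}) (ind {k})"
  have f: "?f z = ind {k} (gmul (ginv h) z)" for z using conv_ind1[OF finG hG] .
  have "B \<subseteq> {gmul h k}"
  proof
    fix w assume w: "w \<in> B"
    have "?f w = ?f (gmul h k)" by (rule block_const) (use assms B w in \<open>auto simp: H_def\<close>)
    also have "\<dots> = 1" using f cancel1[OF hG] by (simp add: ind_def)
    finally have "gmul (ginv h) w = k" using f by (simp add: ind_def split: if_splits)
    hence "w = gmul h k" using cancel2[OF hG, of w] by simp
    thus "w \<in> {gmul h k}" by simp
  qed
  hence "B = {gmul h k}" using B by auto
  thus ?thesis using B by (simp add: H_def)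
qed

lemma H_pow: "h \<in> H \<Longrightarrow> gpow h n \<in> H"
  by (induction n) (auto simp: gone_H gpow_Suc H_mul)

lemma H_inv: assumes "h \<in> H" shows "ginv h \<in> H"
proof -
  have hG: "h \<in> G" using assms H_G by auto
  have "gmul h (gpow h (p - 1)) = gpow h p"
    using p_pos by (metis gpow_Suc Suc_diff_1)
  also have "\<dots> = gone" using gpow_p hG by blast
  finally have "gpow h (p - 1) = ginv h" using inv_unique hG by blast
  thus ?thesis using H_pow assms by metis
qed

lemma H_sqrt: "u \<in> G \<Longrightarrow> gmul u u \<in> H \<Longrightarrow> u \<in> H"
  using gsqrt[OF odd, of u] H_pow by metis

lemma transl:
  assumes h: "h \<in> H" and A: "A \<in> P"
  shows "gmul h ` A \<in> P"
proof -
  have hG: "h \<in> G" using h H_G by auto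
  obtain a where a: "a \<in> A" using P_ne A by blast
  have aG: "a \<in> G" using a A P_sub by auto
  have y: "gmul h a \<in> G" using gmul_mem hG aG by blast
  obtain B where B: "B \<in> P" "gmul h a \<in> B" using P_cover y by blast
  let ?f = "conv G (ind {h}) (ind A)"
  have f: "?f z = ind A (gmul (ginv h) z)" for z using conv_ind1[OF finG hG] .
  have sub: "B \<subseteq> gmul h ` A"
  proof
    fix w assume w: "w \<in> B"
    have "?f w = ?f (gmul h a)" by (rule block_const) (use h A B w in \<open>auto simp: H_def\<close>)
    also have "\<dots> = 1" using f cancel1[OF hG] a by (simp add: ind_def)
    finally have "gmul (ginv h) w \<in> A" using f by (simp add: ind_def split: if_splits)
    moreover have "w = gmul h (gmul (ginv h) w)" using cancel2[OF hG, of w] by simp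
    ultimately show "w \<in> gmul h ` A" by blast
  qed
  have inj: "inj_on (gmul h) A" by (intro inj_onI) (use gmul_cancel[OF p_pos hG] in blast)
  have cardI: "card (gmul h ` A) = card A" using card_image[OF inj] .
  have finI: "finite (gmul h ` A)" using finA[OF A] by simp
  have Bne: "B \<noteq> {}" using B by auto
  from card12[OF A] show ?thesis
  proof
    assume "card A = 1"
    hence "card B \<ge> card (gmul h ` A)" using cardI Bne card_0_eq[OF finA[OF B(1)]] by linarith
    hence "B = gmul h ` A" using card_seteq[OF finI sub] by blast
    thus ?thesis using B by simp
  next
    assume c2: "card A = 2"
    have "card B \<noteq> 1"
    proof
      assume "card B = 1"
      then obtain b where "B = {b}" by (auto simp: card_Suc_eq)
      hence "gmul h a \<in> H" using B by (simp add: H_def)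
      hence "gmul (ginv h) (gmul h a) \<in> H" using H_mul H_inv h by blast
      hence "{a} \<in> P" using cancel1[OF hG] by (simp add: H_def)
      hence "A = {a}" using P_disj A a by blast
      thus False using c2 by simp
    qed
    hence "card B = 2" using card12[OF B(1)] by simp
    hence "B = gmul h ` A" using card_subset_eq[OF finI sub] cardI c2 by simp
    thus ?thesis using B by simp
  qed
qed

lemma pair_prod:
  assumes A: "A \<in> P" "A = {x, y}" "x \<noteq> y"
  shows "gmul x y \<in> H"
proof -
  have xG: "x \<in> G" and yG: "y \<in> G" using A P_sub by auto
  have xy: "gmul x y \<in> G" using gmul_mem xG yG by blast
  obtain B where B: "B \<in> P" "gmul x y \<in> B" using P_cover xy by blast
  let ?f = "conv G (ind A) (ind A)"
  have f: "?f z = ind A (gmul (ginv x) z) + ind A (gmul (ginv y) z)" for z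
    using conv_ind2[OF finG, of x y "ind A" z] A P_sub[OF A(1)] by auto
  have e1: "gmul (ginv x) (gmul x y) = y" using cancel1[OF xG] .
  have e2: "gmul (ginv y) (gmul x y) = x" using cancel1[OF yG] gmul_comm by metis
  have fxy: "?f (gmul x y) = 2" using f[of "gmul x y"] e1 e2 A by (simp add: ind_def)
  from card12[OF B(1)] show ?thesis
  proof
    assume "card B = 1"
    then obtain b where "B = {b}" by (auto simp: card_Suc_eq)
    thus ?thesis using B by (simp add: H_def)
  next
    assume "card B = 2"
    then obtain w where w: "w \<in> B" "w \<noteq> gmul x y"
      by (metis card_2_iff insert_iff)
    have "?f w = 2" using block_const[OF A(1) A(1) B(1) w(1) B(2)] fxy by simp
    hence i1: "gmul (ginv x) w \<in> A" and i2: "gmul (ginv y) w \<in> A" using f[of w]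
      by (auto simp: ind_def split: if_splits)
    have wG: "w \<in> G" using w B P_sub by auto
    have "gmul (ginv x) w \<noteq> y" using w cancel2[OF xG, of w] by metis
    hence "gmul (ginv x) w = x" using i1 A by auto
    hence wx: "w = gmul x x" using cancel2[OF xG, of w] by metis
    have "gmul (ginv y) w \<noteq> x" using w cancel2[OF yG, of w] gmul_comm by metis
    hence "gmul (ginv y) w = y" using i2 A by auto
    hence wy: "w = gmul y y" using cancel2[OF yG, of w] by metis
    have "x = y" using sq_inj xG yG wx wy by metis
    thus ?thesis using A by simp
  qed
qed

end



context FP begin

definition S where "S = {z \<in> G. {z, ginv z} \<in> P}"

lemma S_G: "z \<in> S \<Longrightarrow> z \<in> G" by (simp add: S_def)
lemma gone_S: "gone \<in> S" using one_P gone_mem by (simp add: S_def)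
lemma S_inv: "z \<in> S \<Longrightarrow> ginv z \<in> S"
  using ginv_mem by (auto simp: S_def insert_commute)

lemma S_H: assumes "z \<in> S" "z \<in> H" shows "z = gone"
proof -
  have zG: "z \<in> G" using assms S_G by auto
  have "{z} = {z, ginv z}" using P_disj[of "{z}" "{z, ginv z}" z] assms by (auto simp: S_def H_def)
  hence "ginv z = z" by auto
  hence "gmul z z = gone" using gmul_ginv[OF p_pos zG] by simp
  thus ?thesis using sq_one zG by blast
qed

lemma S_ne_inv: assumes "z \<in> S" "z \<noteq> gone" shows "ginv z \<noteq> z"
proof
  assume "ginv z = z"
  hence "gmul z z = gone" using gmul_ginv[OF p_pos S_G[OF assms(1)]] by simp
  thus False using sq_one S_G assms by blast
qed

lemma S_notH: "z \<in> S \<Longrightarrow> z \<noteq> gone \<Longrightarrow> z \<notin> H" using S_H by blast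

lemma S_unique: assumes u: "u \<in> S" and h: "h \<in> H" and v: "gmul u h \<in> S" shows "h = gone"
proof (cases "u = gone")
  case True thus ?thesis using S_H h v by simp
next
  case False
  have uG: "u \<in> G" and hG: "h \<in> G" using u h S_G H_G by auto
  define w where "w = gmul u h"
  have wG: "w \<in> G" using gmul_mem uG hG w_def by blast
  have T: "gmul h ` {u, ginv u} \<in> P" using transl[OF h, of "{u, ginv u}"] u by (simp add: S_def)
  have wT: "w \<in> gmul h ` {u, ginv u}" using w_def gmul_comm by auto
  have "{w, ginv w} = gmul h ` {u, ginv u}"
    using P_disj[OF _ T, of "{w, ginv w}" w] v wT by (simp add: S_def w_def)
  hence "ginv w = gmul h u \<or> ginv w = gmul h (ginv u)" by auto
  thus ?thesis
  proof
    assume "ginv w = gmul h u"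
    hence "ginv w = w" using w_def gmul_comm by metis
    hence "gmul w w = gone" using gmul_ginv[OF p_pos wG] by simp
    hence "w = gone" using sq_one wG by blast
    hence "gmul h u = gone" using w_def gmul_comm by metis
    hence "u = ginv h" using inv_unique hG by blast
    hence "u \<in> H" using H_inv h by simp
    thus ?thesis using S_H u False by blast
  next
    assume "ginv w = gmul h (ginv u)"
    hence "gmul (ginv u) (ginv h) = gmul (ginv u) h" unfolding w_def ginv_gmul using gmul_comm by metis
    hence "ginv h = h" using gmul_cancel[OF p_pos ginv_mem[OF uG]] by blast
    hence "gmul h h = gone" using gmul_ginv[OF p_pos hG] by simp
    thus ?thesis using sq_one hG by blast
  qed
qed

lemma S_mul: assumes u: "u \<in> S" and v: "v \<in> S" shows "gmul u v \<in> S"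
proof -
  have uG: "u \<in> G" and vG: "v \<in> G" using u v S_G by auto
  have uvG: "gmul u v \<in> G" using gmul_mem uG vG by blast
  show ?thesis
  proof (cases "u = gone \<or> v = gone")
    case True thus ?thesis using u v by auto
  next
    case False
    hence u1: "u \<noteq> gone" and v1: "v \<noteq> gone" by auto
    show ?thesis
    proof (cases "gmul u v \<in> H")
      case True
      have "gmul (ginv u) (gmul u v) = v" using cancel1[OF uG] .
      hence "gmul u v = gone" using S_unique[OF S_inv[OF u] True] v by simp
      thus ?thesis using gone_S by simp
    next
      case notH: False
      obtain B where B: "B \<in> P" "gmul u v \<in> B" using P_cover uvG by blast
      have "card B \<noteq> 1"
      proof
        assume "card B = 1"
        then obtain b where "B = {b}" by (auto simp: card_Suc_eq)
        thus False using B notH by (simp add: H_def)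
      qed
      hence "card B = 2" using card12 B by blast
      then obtain a b where ab: "B = {a, b}" "a \<noteq> b" by (auto simp: card_2_iff)
      define w where "w = (if a = gmul u v then b else a)"
      have w: "w \<in> B" "w \<noteq> gmul u v" and Beq: "B = {gmul u v, w}"
        using ab B(2) unfolding w_def by auto
      have wG: "w \<in> G" using w B P_sub by auto
      have kH: "gmul (gmul u v) w \<in> H" using pair_prod[OF B(1) Beq] w by simp
      let ?U = "{u, ginv u}" and ?V = "{v, ginv v}"
      have U: "?U \<in> P" and V: "?V \<in> P" using u v by (auto simp: S_def)
      have f: "conv G (ind ?U) (ind ?V) z = ind ?V (gmul (ginv u) z) + ind ?V (gmul u z)" for z
        using conv_ind2[OF finG, of u "ginv u" "ind ?V" z] P_sub[OF U] S_ne_inv[OF u u1] by auto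
      have "conv G (ind ?U) (ind ?V) w = conv G (ind ?U) (ind ?V) (gmul u v)"
        by (rule block_const[OF U V B(1) w(1) B(2)])
      moreover have "ind ?V (gmul (ginv u) (gmul u v)) = 1" using cancel1[OF uG] by (simp add: ind_def)
      moreover have "ind ?V x \<ge> 0" for x by (simp add: ind_def)
      ultimately have "ind ?V (gmul (ginv u) w) + ind ?V (gmul u w) \<ge> 1"
        using f[of w] f[of "gmul u v"] by (smt (verit))
      hence "gmul (ginv u) w \<in> ?V \<or> gmul u w \<in> ?V" by (auto simp: ind_def split: if_splits)
      moreover have wr: "w = gmul u (gmul (ginv u) w)" using cancel2[OF uG] by simp
      moreover have wr2: "w = gmul (ginv u) (gmul u w)" using cancel1[OF uG] by simp
      ultimately consider "w = gmul u v" | "w = gmul u (ginv v)" | "w = gmul (ginv u) v" |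
          "w = gmul (ginv u) (ginv v)" by auto
      thus ?thesis
      proof cases
        case 1 thus ?thesis using w by simp
      next
        case 2
        have "gmul (gmul u v) w = gmul (gmul u u) (gmul v (ginv v))" unfolding 2
          by (simp add: gmul_def mult_ac)
        hence "gmul (gmul u v) w = gmul u u" using gmul_ginv[OF p_pos vG] by simp
        hence "u \<in> H" using H_sqrt uG kH by metis
        thus ?thesis using S_H u u1 by blast
      next
        case 3
        have "gmul (gmul u v) w = gmul (gmul v v) (gmul u (ginv u))" unfolding 3
          by (simp add: gmul_def mult_ac)
        hence "gmul (gmul u v) w = gmul v v" using gmul_ginv[OF p_pos uG] by simp
        hence "v \<in> H" using H_sqrt vG kH by metis
        thus ?thesis using S_H v v1 by blast
      next
        case 4
        hence "w = ginv (gmul u v)" by (simp add: ginv_gmul)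
        thus ?thesis using Beq B uvG by (simp add: S_def)
      qed
    qed
  qed
qed

lemma decompose:
  assumes A: "A \<in> P" "card A = 2"
  shows "\<exists>c\<in>H. \<exists>z\<in>S. z \<noteq> gone \<and> A = {gmul c z, gmul c (ginv z)}"
proof -
  obtain x y where xy: "A = {x, y}" "x \<noteq> y" using A(2) by (auto simp: card_2_iff)
  have xG: "x \<in> G" and yG: "y \<in> G" using A xy P_sub by auto
  define k where "k = gmul x y"
  have kH: "k \<in> H" using pair_prod[OF A(1) xy] k_def by simp
  define c where "c = gpow k ((p+1) div 2)"
  have cH: "c \<in> H" using H_pow kH c_def by simp
  have cG: "c \<in> G" using H_G cH by simp
  have cc: "gmul c c = gmul x y" using gsqrt2[OF H_G[OF kH]] c_def k_def by simp
  define z where "z = gmul (ginv c) x"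
  have zG: "z \<in> G" using z_def gmul_mem ginv_mem cG xG by blast
  have nz: "fst x \<noteq> 0" "snd x \<noteq> 0" "fst y \<noteq> 0" "snd y \<noteq> 0" "fst c \<noteq> 0" "snd c \<noteq> 0"
    using nzG xG yG cG by auto
  have e: "gmul (ginv c) y = ginv z"
    using cc nz unfolding z_def by (auto simp: gmul_def ginv_def prod_eq_iff field_simps)
  have "gmul (ginv c) ` A \<in> P" using transl[OF H_inv[OF cH] A(1)] .
  hence "{z, ginv z} \<in> P" using xy e z_def by simp
  hence zS: "z \<in> S" using zG by (simp add: S_def)
  have z1: "z \<noteq> gone"
  proof
    assume "z = gone"
    hence "x = c" using cancel2[OF cG, of x] z_def by simp
    hence "A = {x}" using P_disj[of "{x}" A x] cH A xy by (simp add: H_def)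
    thus False using xy by auto
  qed
  have e1: "gmul c z = x" using cancel2[OF cG] z_def by simp
  have e2: "gmul c (ginv z) = y" using cancel2[OF cG] e by metis
  show ?thesis using cH zS z1 e1 e2 xy by blast
qed

end



context FP begin

lemma sing_eq: "{A \<in> P. singular A} = (\<lambda>x. {x}) ` H"
proof
  show "{A \<in> P. singular A} \<subseteq> (\<lambda>x. {x}) ` H"
  proof
    fix A assume "A \<in> {A \<in> P. singular A}"
    hence A: "A \<in> P" "card A = 1" by (auto simp: singular_def)
    then obtain x where "A = {x}" by (auto simp: card_Suc_eq)
    thus "A \<in> (\<lambda>x. {x}) ` H" using A by (auto simp: H_def)
  qed
next
  show "(\<lambda>x. {x}) ` H \<subseteq> {A \<in> P. singular A}"
  proof
    fix A assume "A \<in> (\<lambda>x. {x}) ` H"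
    then obtain x where "x \<in> H" "A = {x}" by blast
    thus "A \<in> {A \<in> P. singular A}" by (simp add: H_def singular_def)
  qed
qed

lemma finH: "finite H" by (rule finite_subset[OF _ finG]) (use H_G in blast)

lemma cardH: "card {A \<in> P. singular A} = p \<Longrightarrow> card H = p"
  using sing_eq card_image[of "\<lambda>x. {x}" H] by (simp add: inj_on_def)

lemma coprime_small: "0 < k \<Longrightarrow> k < p \<Longrightarrow> coprime k p"
  using prime_imp_coprime[OF prime, of k] dvd_imp_le[of p k] by (auto simp: coprime_commute)

lemma pow_ne: assumes "x \<in> G" "x \<noteq> gone" "i < j" "j < p" shows "gpow x i \<noteq> gpow x j"
proof
  assume eq: "gpow x i = gpow x j"
  have "gpow x j = gmul (gpow x i) (gpow x (j - i))" using assms(3) by (simp flip: gpow_add)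
  hence "gpow x (j - i) = gone"
    using eq gmul_cancel[OF p_pos gpow_mem[OF assms(1)], of i "gpow x (j-i)" gone] by simp
  moreover have "coprime (j - i) p" using coprime_small[of "j - i"] assms by simp
  ultimately have "x = gone" using gpow_coprime[OF assms(1), of "j - i"] assms(3) by simp
  thus False using assms by simp
qed

lemma pow_inj: "x \<in> G \<Longrightarrow> x \<noteq> gone \<Longrightarrow> inj_on (gpow x) {..<p}"
  by (intro linorder_inj_onI') (use pow_ne in auto)

lemma p_ge2: "p \<ge> 2" using prime prime_ge_2_nat by blast

theorem main:
  assumes cs: "card {A \<in> P. singular A} = p"
  shows "\<exists>\<alpha>\<in>mu2 p. \<exists>\<beta>\<in>mu2 p.
     {A \<in> P. singular A} = {{gpow \<alpha> i} | i. i \<le> p - 1} \<and>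
     {A \<in> P. \<not> singular A} =
       {{gmul (gpow \<alpha> i) (gpow \<beta> j), gmul (gpow \<alpha> i) (gpow (ginv \<beta>) j)} | i j.
          i \<le> p - 1 \<and> 1 \<le> j \<and> j \<le> p - 1}"
proof -
  have cH: "card H = p" using cardH cs .
  obtain \<alpha> where \<alpha>: "\<alpha> \<in> H" "\<alpha> \<noteq> gone"
  proof -
    have "\<not> H \<subseteq> {gone}"
    proof
      assume "H \<subseteq> {gone}"
      hence "card H \<le> 1" using card_mono[of "{gone}" H] by simp
      thus False using cH p_ge2 by simp
    qed
    thus ?thesis using that by blast
  qed
  have \<alpha>G: "\<alpha> \<in> G" using H_G \<alpha> by simp
  have Heq: "H = gpow \<alpha> ` {..<p}"
  proof -
    have sub: "gpow \<alpha> ` {..<p} \<subseteq> H" using H_pow[OF \<alpha>(1)] by blast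
    have "card (gpow \<alpha> ` {..<p}) = p" using card_image[OF pow_inj[OF \<alpha>G \<alpha>(2)]] by simp
    thus ?thesis using card_subset_eq[OF finH sub] cH by simp
  qed
  have "\<not> G \<subseteq> H"
  proof
    assume "G \<subseteq> H"
    hence "card G \<le> card H" using card_mono finH by blast
    thus False using card_mu2[OF p_pos] cH p_ge2 by (simp add: mult_le_cancel1)
  qed
  then obtain x where x: "x \<in> G" "x \<notin> H" by blast
  obtain A where A: "A \<in> P" "x \<in> A" using P_cover x by blast
  have "card A \<noteq> 1"
  proof
    assume "card A = 1"
    then obtain b where "A = {b}" by (auto simp: card_Suc_eq)
    thus False using A x by (simp add: H_def)
  qed
  hence "card A = 2" using card12 A by blast
  then obtain c0 \<beta> where \<beta>: "\<beta> \<in> S" "\<beta> \<noteq> gone" using decompose A by blast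
  have \<beta>G: "\<beta> \<in> G" using S_G \<beta> by simp
  have \<beta>S: "gpow \<beta> j \<in> S" for j
    by (induction j) (auto simp: gone_S gpow_Suc intro: S_mul \<beta>)
  have \<beta>ne: "gpow \<beta> j \<noteq> gone" if "1 \<le> j" "j < p" for j
    using pow_ne[OF \<beta>G \<beta>(2), of 0 j] that by simp
  define F where "F = (\<lambda>(a, b). gmul (gpow \<alpha> a) (gpow \<beta> b))"
  have Fne: "F (a, b) \<noteq> F (a', b')" if "b < b'" "b' < p" for a a' b b'
  proof
    assume eq: "F (a, b) = F (a', b')"
    have gb: "gpow \<beta> b' = gmul (gpow \<beta> b) (gpow \<beta> (b' - b))"
      using that gpow_add[of \<beta> b "b' - b"] by simp
    have e2: "F (a', b') = gmul (gpow \<beta> b) (gmul (gpow \<alpha> a') (gpow \<beta> (b' - b)))"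
      unfolding F_def prod.case gb by (rule gmul_left_comm)
    have e3: "F (a, b) = gmul (gpow \<beta> b) (gpow \<alpha> a)" unfolding F_def prod.case by (rule gmul_comm)
    have "gmul (gpow \<beta> b) (gpow \<alpha> a) = gmul (gpow \<beta> b) (gmul (gpow \<alpha> a') (gpow \<beta> (b' - b)))"
      using eq e2 e3 by simp
    hence "gpow \<alpha> a = gmul (gpow \<alpha> a') (gpow \<beta> (b' - b))"
      using gmul_cancel[OF p_pos gpow_mem[OF \<beta>G]] by blast
    hence "gpow \<beta> (b' - b) = gmul (ginv (gpow \<alpha> a')) (gpow \<alpha> a)"
      using cancel1[OF gpow_mem[OF \<alpha>G]] by simp
    hence "gpow \<beta> (b' - b) \<in> H" using H_mul H_inv H_pow \<alpha> by simp
    hence "gpow \<beta> (b' - b) = gone" using S_H \<beta>S by blast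
    thus False using \<beta>ne[of "b' - b"] that by simp
  qed
  have Finj: "inj_on F ({..<p} \<times> {..<p})"
  proof (rule inj_onI, clarify)
    fix a b a' b' assume ab: "a < p" "b < p" "a' < p" "b' < p" and eq: "F (a, b) = F (a', b')"
    have "b = b'"
    proof (rule ccontr)
      assume "b \<noteq> b'"
      hence "b < b' \<or> b' < b" by linarith
      thus False using Fne[of b b' a a'] Fne[of b' b a' a] eq ab by auto
    qed
    hence "gpow \<alpha> a = gpow \<alpha> a'" using eq gmul_cancel[OF p_pos gpow_mem[OF \<beta>G]]
      unfolding F_def by (simp add: gmul_comm)
    hence "a = a'" using pow_inj[OF \<alpha>G \<alpha>(2)] ab by (auto dest: inj_onD)
    thus "a = a' \<and> b = b'" using \<open>b = b'\<close> by simp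
  qed
  have Fsub: "F ` ({..<p} \<times> {..<p}) \<subseteq> G" unfolding F_def using \<alpha>G \<beta>G
    by (auto intro!: gmul_mem gpow_mem)
  have FG: "F ` ({..<p} \<times> {..<p}) = G"
    using card_subset_eq[OF finG Fsub] card_image[OF Finj] card_mu2[OF p_pos]
    by (simp add: card_cartesian_product)
  have Spow: "\<exists>j. 1 \<le> j \<and> j \<le> p - 1 \<and> z = gpow \<beta> j" if z: "z \<in> S" "z \<noteq> gone" for z
  proof -
    obtain a b where ab: "a < p" "b < p" "z = F (a, b)" using FG S_G[OF z(1)] by blast
    have b0: "b \<noteq> 0"
    proof
      assume "b = 0"
      hence "z \<in> H" using ab H_pow \<alpha> by (simp add: F_def)
      thus False using S_H z by blast
    qed
    have "gmul z (gpow \<beta> (p - b)) = gmul (gpow \<alpha> a) (gpow \<beta> (b + (p - b)))"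
      unfolding ab F_def by (simp add: gpow_add gmul_assoc)
    also have "b + (p - b) = p" using ab by simp
    also have "gpow \<beta> p = gone" using gpow_p \<beta>G by blast
    finally have "gmul z (gpow \<beta> (p - b)) = gpow \<alpha> a" by simp
    hence "gpow \<alpha> a \<in> S" using S_mul[OF z(1) \<beta>S[of "p - b"]] by simp
    hence "gpow \<alpha> a = gone" using S_H H_pow \<alpha> by blast
    hence "z = gpow \<beta> b" using ab by (simp add: F_def)
    moreover have "1 \<le> b" "b \<le> p - 1" using b0 ab by auto
    ultimately show ?thesis by blast
  qed
  have ginvpow: "gpow (ginv \<beta>) j = ginv (gpow \<beta> j)" for j by (simp add: gpow_ginv)
  have s1: "{A \<in> P. singular A} = {{gpow \<alpha> i} | i. i \<le> p - 1}"
      unfolding sing_eq Heq using p_pos by auto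
    have s2: "{A \<in> P. \<not> singular A} =
       {{gmul (gpow \<alpha> i) (gpow \<beta> j), gmul (gpow \<alpha> i) (gpow (ginv \<beta>) j)} | i j.
          i \<le> p - 1 \<and> 1 \<le> j \<and> j \<le> p - 1}" (is "?L = ?R")
    proof
      show "?L \<subseteq> ?R"
      proof
        fix B assume "B \<in> ?L"
        hence B: "B \<in> P" "card B = 2" using pair by auto
        obtain c z where cz: "c \<in> H" "z \<in> S" "z \<noteq> gone" "B = {gmul c z, gmul c (ginv z)}"
          using decompose[OF B] by blast
        obtain i where i: "i < p" "c = gpow \<alpha> i" using cz Heq by auto
        obtain j where j: "1 \<le> j" "j \<le> p - 1" "z = gpow \<beta> j" using Spow cz by blast
        have "B = {gmul (gpow \<alpha> i) (gpow \<beta> j), gmul (gpow \<alpha> i) (gpow (ginv \<beta>) j)}"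
          using i j cz(4) ginvpow by simp
        moreover have "i \<le> p - 1" using i by simp
        ultimately show "B \<in> ?R" unfolding mem_Collect_eq
          by (intro exI[of _ i] exI[of _ j]) (use j in simp)
      qed
    next
      show "?R \<subseteq> ?L"
      proof
        fix B assume "B \<in> ?R"
        then obtain i j where ij: "i \<le> p - 1" "1 \<le> j" "j \<le> p - 1"
          and B: "B = {gmul (gpow \<alpha> i) (gpow \<beta> j), gmul (gpow \<alpha> i) (gpow (ginv \<beta>) j)}"
          by blast
        define z where "z = gpow \<beta> j"
        have zS: "z \<in> S" using \<beta>S z_def by simp
        have z1: "z \<noteq> gone" using \<beta>ne ij p_pos z_def by simp
        have cH: "gpow \<alpha> i \<in> H" using H_pow \<alpha> by simp
        have Beq: "B = gmul (gpow \<alpha> i) ` {z, ginv z}" using B ginvpow z_def by simp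
        have "B \<in> P" using transl[OF cH, of "{z, ginv z}"] zS Beq by (simp add: S_def)
        moreover have "card B = 2"
        proof -
          have "gmul (gpow \<alpha> i) z \<noteq> gmul (gpow \<alpha> i) (ginv z)"
          proof
            assume "gmul (gpow \<alpha> i) z = gmul (gpow \<alpha> i) (ginv z)"
            hence "z = ginv z" using gmul_cancel[OF p_pos H_G[OF cH]] by blast
            thus False using S_ne_inv[OF zS z1] by simp
          qed
          thus ?thesis using Beq by simp
        qed
        ultimately show "B \<in> ?L" by (simp add: singular_def)
      qed
    qed
  show ?thesis
    apply (rule bexI[of _ \<alpha>])
     apply (rule bexI[of _ \<beta>])
      apply (rule conjI[OF s1 s2])
     apply (rule \<beta>G)
    apply (rule \<alpha>G)
    done
qed

end

theorem theorem4p1: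
  fixes p :: nat and P :: "elt set set"
  assumes "prime p" and "odd p"
    and "fusion_partition (mu2 p) P"
    and "card {A \<in> P. singular A} = p"
    and "\<forall>A\<in>P. \<not> singular A \<longrightarrow> card A = 2"
  shows "\<exists>\<alpha>\<in>mu2 p. \<exists>\<beta>\<in>mu2 p.
     {A \<in> P. singular A} = {{gpow \<alpha> i} | i. i \<le> p - 1} \<and>
     {A \<in> P. \<not> singular A} =
       {{gmul (gpow \<alpha> i) (gpow \<beta> j), gmul (gpow \<alpha> i) (gpow (ginv \<beta>) j)} | i j.
          i \<le> p - 1 \<and> 1 \<le> j \<and> j \<le> p - 1}"
    using FP.main[of p P] assms by (simp add: FP_def fusion_partition_def)

end
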